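(* The transition kernel $\hat\pi^{(\epsilon)}(x,dy)$ converges in total variation to $W_1(dy)$ uniformly in $x$: $\sup_{x\in\Omega_1}d_{TV}(\hat\pi^{(\epsilon)}(x,\cdot),W_1)\to0$ as $\epsilon\to0$. Moreover, for any $\gamma\in(0,1)$ there is $\epsilon_0=\epsilon_0(\gamma)$ such that $\hat\pi^{(\epsilon)}(x,A)\ge\gamma W_1(A)$ for all $x\in\Omega_1$, all Borel $A\subseteq\Omega_1$ and all $\epsilon<\epsilon_0$.
   Context: $\phi,\psi$ positive smooth, $\phi$ supported in $[0,1]$, $\psi:\mathbb{R}^2\to\mathbb{R}$ symmetric supported in $\{|x|\le1/2\}$, $R(s,y)=(\phi\star\tilde\phi)(s)(\psi\star\psi)(y)$, $\tilde\phi(s)=\phi(-s)$. Fix $\hat\beta>0$, let $\beta_\epsilon=\hat\beta/\sqrt{\log(1/\epsilon)}$. $\Omega_1=\{\omega\in C([0,1];\mathbb{R}^2):\omega(0)=0\}$, $W_1$ Wiener measure on $\Omega_1$, $\hat{\mathbb{P}}^{(\epsilon)}_1(dx)\propto\exp\big(\frac{\beta_\epsilon^2}{2}\int_{[0,1]^2}R(s-u,x(s)-x(u))dsdu\big)W_1(dx)$ normalized to a probability. $I^{(\epsilon)}(x,y)=\beta_\epsilon^2\int_{[0,1]^2}R(s-u,y(s)+x(1)-x(u))dsdu$ for $x,y\in\Omega_1$. Let $\rho^{(\epsilon)}>0$ be the largest eigenvalue and $\Psi^{(\epsilon)}$ the (unique) associated eigenfunction of $\int_{\Omega_1}e^{I^{(\epsilon)}(x,y)}\Psi(y)\hat{\mathbb{P}}^{(\epsilon)}_1(dy)=\rho\Psi(x)$,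 with $\Psi^{(\epsilon)}$ bounded above and below by positive constants and $\int\Psi^{(\epsilon)}d\hat{\mathbb{P}}^{(\epsilon)}_1=1$. Define $\hat\pi^{(\epsilon)}(x,dy)=\frac{e^{I^{(\epsilon)}(x,y)}\Psi^{(\epsilon)}(y)\hat{\mathbb{P}}^{(\epsilon)}_1(dy)}{\rho^{(\epsilon)}\Psi^{(\epsilon)}(x)}$. *)

theory Defs
  imports "HOL-Probability.Probability"
begin

definition pdir :: "'a::euclidean_space \<Rightarrow> ('a \<Rightarrow> real) \<Rightarrow> 'a \<Rightarrow> real" where
  "pdir v g x = deriv (\<lambda>t. g (x + t *\<^sub>R v)) 0"

definition smooth_fun :: "('a::euclidean_space \<Rightarrow> real) \<Rightarrow> bool" where
  "smooth_fun g \<longleftrightarrow>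
     (\<forall>vs. set vs \<subseteq> Basis \<longrightarrow>
        continuous_on UNIV (foldr pdir vs g) \<and>
        (\<forall>v\<in>Basis. \<forall>x. (\<lambda>t. foldr pdir vs g (x + t *\<^sub>R v)) differentiable (at 0)))"

text \<open>Paths are represented extensionally: value 0 outside [0,1].\<close>
definition Omega1 :: "(real \<Rightarrow> real^2) set" where
  "Omega1 = {\<omega>. continuous_on {0..1} \<omega> \<and> \<omega> 0 = 0 \<and> (\<forall>t. t \<notin> {0..1} \<longrightarrow> \<omega> t = 0)}"

definition sup_dist :: "(real \<Rightarrow> real^2) \<Rightarrow> (real \<Rightarrow> real^2) \<Rightarrow> real" where
  "sup_dist \<omega> \<eta> = (SUP t\<in>{0..1}. norm (\<omega> t - \<eta> t))"

definition Omega1_open :: "(real \<Rightarrow> real^2) set \<Rightarrow> bool" where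
  "Omega1_open U \<longleftrightarrow> U \<subseteq> Omega1 \<and>
     (\<forall>\<omega>\<in>U. \<exists>e>0. \<forall>\<eta>\<in>Omega1. sup_dist \<omega> \<eta> < e \<longrightarrow> \<eta> \<in> U)"

definition Omega1_borel :: "(real \<Rightarrow> real^2) measure" where
  "Omega1_borel = sigma Omega1 {U. Omega1_open U}"

definition is_wiener :: "(real \<Rightarrow> real^2) measure \<Rightarrow> bool" where
  "is_wiener W \<longleftrightarrow> prob_space W \<and> sets W = sets Omega1_borel \<and> space W = Omega1 \<and>
     (\<forall>(t::nat \<Rightarrow> real) n. t 0 = 0 \<and> (\<forall>i<n. t i < t (Suc i)) \<and> t n \<le> 1 \<longrightarrow>
        prob_space.indep_vars W (\<lambda>_. borel)
          (\<lambda>(i, k) \<omega>. (\<omega> (t (Suc i)) - \<omega> (t i)) $ k) ({..<n} \<times> (UNIV :: 2 set)) \<and>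
        (\<forall>i<n. \<forall>k::2. distributed W lborel (\<lambda>\<omega>. (\<omega> (t (Suc i)) - \<omega> (t i)) $ k)
                         (normal_density 0 (sqrt (t (Suc i) - t i)))))"

definition conv_R :: "(real \<Rightarrow> real) \<Rightarrow> (real^2 \<Rightarrow> real) \<Rightarrow> real \<Rightarrow> real^2 \<Rightarrow> real" where
  "conv_R \<phi> \<psi> s y =
     (\<integral>u. \<phi> (s - u) * \<phi> (- u) \<partial>lborel) * (\<integral>z. \<psi> (y - z) * \<psi> z \<partial>lborel)"

definition beta_eps :: "real \<Rightarrow> real \<Rightarrow> real" where
  "beta_eps \<beta>h \<epsilon> = \<beta>h / sqrt (ln (1 / \<epsilon>))"

definition self_energy :: "(real \<Rightarrow> real^2 \<Rightarrow> real) \<Rightarrow> real \<Rightarrow> (real \<Rightarrow> real^2) \<Rightarrow> real" where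
  "self_energy R \<beta> x =
     \<beta>\<^sup>2 / 2 * (\<integral>s\<in>{0..1}. (\<integral>u\<in>{0..1}. R (s - u) (x s - x u) \<partial>lborel) \<partial>lborel)"

definition Phat :: "(real \<Rightarrow> real^2) measure \<Rightarrow> (real \<Rightarrow> real^2 \<Rightarrow> real) \<Rightarrow> real
                     \<Rightarrow> (real \<Rightarrow> real^2) measure" where
  "Phat W R \<beta> = density W (\<lambda>x. ennreal (exp (self_energy R \<beta> x) /
                     (\<integral>y. exp (self_energy R \<beta> y) \<partial>W)))"

definition interaction :: "(real \<Rightarrow> real^2 \<Rightarrow> real) \<Rightarrow> real \<Rightarrow> (real \<Rightarrow> real^2)
                             \<Rightarrow> (real \<Rightarrow> real^2) \<Rightarrow> real" where
  "interaction R \<beta> x y =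
     \<beta>\<^sup>2 * (\<integral>s\<in>{0..1}. (\<integral>u\<in>{0..1}. R (s - u) (y s + x 1 - x u) \<partial>lborel) \<partial>lborel)"

definition kernel_pi :: "(real \<Rightarrow> real^2) measure \<Rightarrow> (real \<Rightarrow> real^2 \<Rightarrow> real) \<Rightarrow> real
     \<Rightarrow> real \<Rightarrow> ((real \<Rightarrow> real^2) \<Rightarrow> real) \<Rightarrow> (real \<Rightarrow> real^2) \<Rightarrow> (real \<Rightarrow> real^2) measure" where
  "kernel_pi W R \<beta> \<rho> \<Psi> x = density (Phat W R \<beta>)
     (\<lambda>y. ennreal (exp (interaction R \<beta> x y) * \<Psi> y / (\<rho> * \<Psi> x)))"

definition is_eigenpair :: "(real \<Rightarrow> real^2) measure \<Rightarrow> (real \<Rightarrow> real^2 \<Rightarrow> real) \<Rightarrow> real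
     \<Rightarrow> real \<Rightarrow> ((real \<Rightarrow> real^2) \<Rightarrow> real) \<Rightarrow> bool" where
  "is_eigenpair W R \<beta> lam f \<longleftrightarrow>
     f \<in> borel_measurable Omega1_borel \<and> (\<exists>C. \<forall>x\<in>Omega1. \<bar>f x\<bar> \<le> C) \<and>
     (\<exists>x\<in>Omega1. f x \<noteq> 0) \<and>
     (\<forall>x\<in>Omega1. (\<integral>y. exp (interaction R \<beta> x y) * f y \<partial>Phat W R \<beta>) = lam * f x)"

definition dTV :: "'a measure \<Rightarrow> 'a measure \<Rightarrow> real" where
  "dTV M N = (SUP A\<in>sets M. \<bar>measure M A - measure N A\<bar>)"

end

theory Submission
  imports Defs "HOL-Real_Asymp.Real_Asymp"
begin

lemma int_le:
  fixes f g :: "'a \<Rightarrow> real"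
  assumes "integrable M g" "\<And>x. x \<in> space M \<Longrightarrow> f x \<le> g x" "\<And>x. x \<in> space M \<Longrightarrow> 0 \<le> g x"
  shows "integral\<^sup>L M f \<le> integral\<^sup>L M g"
proof (cases "integrable M f")
  case True thus ?thesis using assms integral_mono by blast
next
  case False thus ?thesis using assms(3) by (simp add: not_integrable_integral_eq)
qed

lemma bound_fun:
  fixes f :: "'a::euclidean_space \<Rightarrow> real"
  assumes "continuous_on UNIV f" "compact K" "\<And>x. x \<notin> K \<Longrightarrow> f x = 0"
  shows "\<exists>M>0. \<forall>x. \<bar>f x\<bar> \<le> M"
proof -
  have "compact (f ` K)"
    by (rule compact_continuous_image) (use assms continuous_on_subset in blast)+
  then obtain b where b: "b > 0" "\<forall>y\<in>f ` K. norm y \<le> b"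
    using compact_imp_bounded bounded_pos by metis
  show ?thesis
  proof (intro exI[of _ b] conjI allI)
    fix x show "\<bar>f x\<bar> \<le> b" using b assms(3)[of x] by (cases "x \<in> K") auto
  qed (use b in auto)
qed

lemma smooth_cont: "smooth_fun g \<Longrightarrow> continuous_on UNIV g"
  unfolding smooth_fun_def by (drule spec[of _ "[]"]) simp

lemma R_bounds:
  fixes \<phi> :: "real \<Rightarrow> real" and \<psi> :: "real^2 \<Rightarrow> real"
  assumes phi_smooth: "smooth_fun \<phi>" and phi_nonneg: "\<And>s. \<phi> s \<ge> 0"
    and phi_supp: "\<And>s. s \<notin> {0..1} \<Longrightarrow> \<phi> s = 0"
    and psi_smooth: "smooth_fun \<psi>" and psi_nonneg: "\<And>y. \<psi> y \<ge> 0"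
    and psi_supp: "\<And>y. norm y > 1/2 \<Longrightarrow> \<psi> y = 0"
  shows "\<exists>B. \<forall>s y. 0 \<le> conv_R \<phi> \<psi> s y \<and> conv_R \<phi> \<psi> s y \<le> B"
proof -
  obtain M1 where M1: "M1 > 0" "\<And>x. \<bar>\<phi> x\<bar> \<le> M1"
    using bound_fun[OF smooth_cont[OF phi_smooth], of "{0..1}"] phi_supp by auto
  obtain M2 where M2: "M2 > 0" "\<And>x. \<bar>\<psi> x\<bar> \<le> M2"
    using bound_fun[OF smooth_cont[OF psi_smooth], of "cball 0 (1/2)"] psi_supp by fastforce
  define B1 where "B1 = integral\<^sup>L lborel (\<lambda>u::real. M1 * M1 * indicator {-1..0} u)"
  define B2 where "B2 = integral\<^sup>L lborel (\<lambda>u::real^2. M2 * M2 * indicator (cball 0 (1/2)) u)"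
  have A: "0 \<le> (\<integral>u. \<phi> (s - u) * \<phi> (- u) \<partial>lborel) \<and> (\<integral>u. \<phi> (s - u) * \<phi> (- u) \<partial>lborel) \<le> B1" for s
  proof
    show "0 \<le> (\<integral>u. \<phi> (s - u) * \<phi> (- u) \<partial>lborel)"
      by (rule Bochner_Integration.integral_nonneg) (simp add: phi_nonneg)
    show "(\<integral>u. \<phi> (s - u) * \<phi> (- u) \<partial>lborel) \<le> B1"
      unfolding B1_def
    proof (rule int_le)
      show "integrable lborel (\<lambda>u::real. M1 * M1 * indicator {-1..0} u)"
        by (intro integrable_mult_right integrable_real_indicator) (auto simp: emeasure_bounded_finite)
      fix u :: real
      show "0 \<le> M1 * M1 * indicator {-1..0} u" using M1 by (simp add: indicator_def)
      show "\<phi> (s - u) * \<phi> (- u) \<le> M1 * M1 * indicator {-1..0} u"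
      proof (cases "u \<in> {-1..0}")
        case True
        have "\<phi> (s - u) * \<phi> (- u) \<le> M1 * M1"
          using M1(2)[of "s-u"] M1(2)[of "-u"] phi_nonneg[of "s-u"] phi_nonneg[of "-u"]
          by (intro mult_mono) auto
        thus ?thesis using True by simp
      next
        case False thus ?thesis using phi_supp[of "-u"] by auto
      qed
    qed
  qed
  have B: "0 \<le> (\<integral>z. \<psi> (y - z) * \<psi> z \<partial>lborel) \<and> (\<integral>z. \<psi> (y - z) * \<psi> z \<partial>lborel) \<le> B2" for y
  proof
    show "0 \<le> (\<integral>z. \<psi> (y - z) * \<psi> z \<partial>lborel)"
      by (rule Bochner_Integration.integral_nonneg) (simp add: psi_nonneg)
    show "(\<integral>z. \<psi> (y - z) * \<psi> z \<partial>lborel) \<le> B2"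
      unfolding B2_def
    proof (rule int_le)
      show "integrable lborel (\<lambda>u::real^2. M2 * M2 * indicator (cball 0 (1/2)) u)"
        using emeasure_bounded_finite[of "cball (0::real^2) (1/2)"] by (intro integrable_mult_right integrable_real_indicator) auto
      fix u :: "real^2"
      show "0 \<le> M2 * M2 * indicator (cball 0 (1/2)) u" using M2 by (simp add: indicator_def)
      show "\<psi> (y - u) * \<psi> u \<le> M2 * M2 * indicator (cball 0 (1/2)) u"
      proof (cases "u \<in> cball 0 (1/2)")
        case True
        have "\<psi> (y - u) * \<psi> u \<le> M2 * M2"
          using M2(2)[of "y-u"] M2(2)[of "u"] psi_nonneg[of "y-u"] psi_nonneg[of "u"]
          by (intro mult_mono) auto
        thus ?thesis using True by simp
      next
        case False thus ?thesis using psi_supp[of "u"] by auto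
      qed
    qed
  qed
  show ?thesis
  proof (intro exI[of _ "B1 * B2"] allI conjI)
    fix s y
    show "0 \<le> conv_R \<phi> \<psi> s y" unfolding conv_R_def using A[of s] B[of y] by simp
    show "conv_R \<phi> \<psi> s y \<le> B1 * B2" unfolding conv_R_def using A[of s] B[of y]
      by (intro mult_mono) auto
  qed
qed

lemma set_bound:
  fixes f :: "real \<Rightarrow> real"
  assumes "\<And>u. 0 \<le> f u" "\<And>u. f u \<le> B"
  shows "0 \<le> (\<integral>u\<in>{0..1}. f u \<partial>lborel) \<and> (\<integral>u\<in>{0..1}. f u \<partial>lborel) \<le> B"
proof
  show "0 \<le> (\<integral>u\<in>{0..1}. f u \<partial>lborel)"
    unfolding set_lebesgue_integral_def
    by (rule Bochner_Integration.integral_nonneg) (simp add: assms indicator_def)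
  have "(\<integral>u\<in>{0..1}. f u \<partial>lborel) \<le> integral\<^sup>L lborel (\<lambda>u. indicator {0..1::real} u * B)"
    unfolding set_lebesgue_integral_def
  proof (rule int_le)
    show "integrable lborel (\<lambda>u. indicator {0..1::real} u * B)"
      by (intro integrable_mult_left integrable_real_indicator) auto
    fix u :: real
    show "0 \<le> indicator {0..1::real} u * B" using assms(1)[of u] assms(2)[of u] by (simp add: indicator_def)
    show "indicator {0..1} u *\<^sub>R f u \<le> indicator {0..1::real} u * B"
      using assms(2)[of u] by (simp add: indicator_def)
  qed
  also have "\<dots> = B" by simp
  finally show "(\<integral>u\<in>{0..1}. f u \<partial>lborel) \<le> B" .
qed

lemma dbl_bound:
  fixes F :: "real \<Rightarrow> real \<Rightarrow> real"
  assumes "\<And>s u. 0 \<le> F s u" "\<And>s u. F s u \<le> B"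
  shows "0 \<le> (\<integral>s\<in>{0..1}. (\<integral>u\<in>{0..1}. F s u \<partial>lborel) \<partial>lborel) \<and>
         (\<integral>s\<in>{0..1}. (\<integral>u\<in>{0..1}. F s u \<partial>lborel) \<partial>lborel) \<le> B"
  by (rule set_bound) (use set_bound[of "F s" B for s] assms in auto)

lemma kernel_bounds:
  fixes R :: "real \<Rightarrow> real^2 \<Rightarrow> real" and \<Psi> :: "(real \<Rightarrow> real^2) \<Rightarrow> real"
  assumes W: "is_wiener W"
  and R0: "\<And>s y. 0 \<le> R s y" and RB: "\<And>s y. R s y \<le> B"
  and rho: "\<rho> > 0"
  and eig: "is_eigenpair W R \<beta> \<rho> \<Psi>"
  and Ppos: "\<And>x. x \<in> Omega1 \<Longrightarrow> 0 < \<Psi> x"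
  and Pn: "(\<integral>y. \<Psi> y \<partial>Phat W R \<beta>) = 1"
  and x: "x \<in> Omega1" and A: "A \<in> sets W"
  shows "exp (-(3*(\<beta>\<^sup>2*B))) * measure W A \<le> measure (kernel_pi W R \<beta> \<rho> \<Psi> x) A \<and>
         measure (kernel_pi W R \<beta> \<rho> \<Psi> x) A \<le> exp (3*(\<beta>\<^sup>2*B)) * measure W A"
proof -
  define d where "d = \<beta>\<^sup>2*B"
  have B0: "0 \<le> B" using R0 RB order_trans by blast
  have d0: "0 \<le> d" using B0 by (simp add: d_def)
  interpret P: prob_space W using W by (simp add: is_wiener_def)
  have spW: "space W = Omega1" and setsW: "sets W = sets Omega1_borel"
    using W by (auto simp: is_wiener_def)
  define SE where "SE = self_energy R \<beta>"
  define I where "I = interaction R \<beta>"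
  have SE: "0 \<le> SE y \<and> SE y \<le> d" for y
  proof -
    have D: "0 \<le> (\<integral>s\<in>{0..1}. (\<integral>u\<in>{0..1}. R (s - u) (y s - y u) \<partial>lborel) \<partial>lborel) \<and>
         (\<integral>s\<in>{0..1}. (\<integral>u\<in>{0..1}. R (s - u) (y s - y u) \<partial>lborel) \<partial>lborel) \<le> B"
      by (rule dbl_bound) (auto intro: R0 RB)
    have "\<beta>\<^sup>2 / 2 * (\<integral>s\<in>{0..1}. (\<integral>u\<in>{0..1}. R (s - u) (y s - y u) \<partial>lborel) \<partial>lborel) \<le> \<beta>\<^sup>2 / 2 * B"
      using D by (intro mult_left_mono) auto
    also have "\<dots> \<le> d" using B0 by (simp add: d_def)
    finally show ?thesis using D unfolding SE_def self_energy_def by auto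
  qed
  have Ib: "0 \<le> I x' y \<and> I x' y \<le> d" for x' y
  proof -
    have D: "0 \<le> (\<integral>s\<in>{0..1}. (\<integral>u\<in>{0..1}. R (s - u) (y s + x' 1 - x' u) \<partial>lborel) \<partial>lborel) \<and>
         (\<integral>s\<in>{0..1}. (\<integral>u\<in>{0..1}. R (s - u) (y s + x' 1 - x' u) \<partial>lborel) \<partial>lborel) \<le> B"
      by (rule dbl_bound) (auto intro: R0 RB)
    have "\<beta>\<^sup>2 * (\<integral>s\<in>{0..1}. (\<integral>u\<in>{0..1}. R (s - u) (y s + x' 1 - x' u) \<partial>lborel) \<partial>lborel) \<le> \<beta>\<^sup>2 * B"
      using D by (intro mult_left_mono) auto
    thus ?thesis using D unfolding I_def interaction_def d_def by auto
  qed
  define Z where "Z = (\<integral>y. exp (SE y) \<partial>W)"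
  define G where "G = (\<lambda>y. exp (SE y) / Z)"
  have Phat_eq: "Phat W R \<beta> = density W (\<lambda>y. ennreal (G y))"
    by (simp add: Phat_def G_def Z_def SE_def)
  have Psi_meas: "\<Psi> \<in> borel_measurable W"
  proof -
    have "\<Psi> \<in> borel_measurable Omega1_borel" using eig by (simp add: is_eigenpair_def)
    thus ?thesis using setsW measurable_cong_sets[of W Omega1_borel borel borel] by simp
  qed
  have intSE: "integrable W (\<lambda>y. exp (SE y))"
  proof (rule ccontr)
    assume "\<not> integrable W (\<lambda>y. exp (SE y))"
    then have "Z = 0" by (simp add: Z_def not_integrable_integral_eq)
    then have "G = (\<lambda>_. 0)" by (simp add: G_def)
    then have "(\<integral>y. \<Psi> y \<partial>Phat W R \<beta>) = (\<integral>y. 0 *\<^sub>R \<Psi> y \<partial>W)"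
      using Phat_eq integral_density[OF Psi_meas, of "\<lambda>_. 0"] by simp
    then show False using Pn by simp
  qed
  have SEmeas: "(\<lambda>y. exp (SE y)) \<in> borel_measurable W" using intSE by auto
  have Gmeas: "G \<in> borel_measurable W"
    unfolding G_def by (rule borel_measurable_divide[OF SEmeas]) simp
  have Z1: "1 \<le> Z"
  proof -
    have "integral\<^sup>L W (\<lambda>_. 1::real) \<le> Z" unfolding Z_def
      by (rule integral_mono) (use intSE SE in auto)
    thus ?thesis by (simp add: P.prob_space)
  qed
  have Zd: "Z \<le> exp d"
  proof -
    have "Z \<le> integral\<^sup>L W (\<lambda>_. exp d)" unfolding Z_def
      by (rule integral_mono) (use intSE SE in auto)
    thus ?thesis by (simp add: P.prob_space)
  qed
  have Gb: "exp (-d) \<le> G y \<and> G y \<le> exp d" for y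
  proof
    have "exp (-d) = 1 / exp d" by (simp add: exp_minus field_simps)
    also have "\<dots> \<le> exp (SE y) / Z" using SE[of y] Z1 Zd
      by (intro frac_le) auto
    finally show "exp (-d) \<le> G y" by (simp add: G_def)
    have "exp (SE y) / Z \<le> exp d / 1" using SE[of y] Z1 Zd
      by (intro frac_le) auto
    thus "G y \<le> exp d" by (simp add: G_def)
  qed
  have G0: "0 \<le> G y" for y using Gb[of y] by (meson exp_ge_zero order_trans)
  have intG: "integrable W G" unfolding G_def using intSE by simp
  have iG: "integral\<^sup>L W G = 1" unfolding G_def using Z1 by (simp add: Z_def)
  have a: "(\<integral>y. G y * \<Psi> y \<partial>W) = 1"
    using Pn Phat_eq integral_density[OF Psi_meas Gmeas] G0 by simp
  have intGP: "integrable W (\<lambda>y. G y * \<Psi> y)"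
    using a not_integrable_integral_eq by fastforce
  have b: "(\<lambda>y. exp (I x' y) * \<Psi> y) \<in> borel_measurable W \<and>
           \<rho> * \<Psi> x' = (\<integral>y. G y * (exp (I x' y) * \<Psi> y) \<partial>W) \<and>
           integrable W (\<lambda>y. G y * (exp (I x' y) * \<Psi> y))" if x': "x' \<in> Omega1" for x'
  proof -
    have e: "(\<integral>y. exp (I x' y) * \<Psi> y \<partial>Phat W R \<beta>) = \<rho> * \<Psi> x'"
      using eig x' unfolding is_eigenpair_def I_def by blast
    have "\<rho> * \<Psi> x' > 0" using rho Ppos[OF x'] by simp
    then have "integrable (Phat W R \<beta>) (\<lambda>y. exp (I x' y) * \<Psi> y)"
      using e not_integrable_integral_eq by fastforce
    then have m1: "(\<lambda>y. exp (I x' y) * \<Psi> y) \<in> borel_measurable (Phat W R \<beta>)" by auto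
    have m: "(\<lambda>y. exp (I x' y) * \<Psi> y) \<in> borel_measurable W"
      using m1 measurable_cong_sets[of "Phat W R \<beta>" W borel borel] by (simp add: Phat_eq)
    have eq: "\<rho> * \<Psi> x' = (\<integral>y. G y * (exp (I x' y) * \<Psi> y) \<partial>W)"
      using e[symmetric] Phat_eq integral_density[OF m Gmeas] G0 by simp
    have "integrable W (\<lambda>y. G y * (exp (I x' y) * \<Psi> y))"
      using eq \<open>\<rho> * \<Psi> x' > 0\<close> not_integrable_integral_eq by fastforce
    thus ?thesis using m eq by blast
  qed
  have rP: "1 \<le> \<rho> * \<Psi> x' \<and> \<rho> * \<Psi> x' \<le> exp d" if x': "x' \<in> Omega1" for x'
  proof
    have "1 = (\<integral>y. G y * \<Psi> y \<partial>W)" using a by simp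
    also have "\<dots> \<le> (\<integral>y. G y * (exp (I x' y) * \<Psi> y) \<partial>W)"
    proof (rule integral_mono[OF intGP])
      show "integrable W (\<lambda>y. G y * (exp (I x' y) * \<Psi> y))" using b[OF x'] by blast
      fix y assume y: "y \<in> space W"
      have "\<Psi> y \<le> exp (I x' y) * \<Psi> y"
        using Ppos[of y] y spW Ib[of x' y] by (simp add: mult_le_cancel_right1)
      thus "G y * \<Psi> y \<le> G y * (exp (I x' y) * \<Psi> y)" using G0[of y] by (rule mult_left_mono)
    qed
    also have "\<dots> = \<rho> * \<Psi> x'" using b[OF x'] by simp
    finally show "1 \<le> \<rho> * \<Psi> x'" .
    have "\<rho> * \<Psi> x' = (\<integral>y. G y * (exp (I x' y) * \<Psi> y) \<partial>W)" using b[OF x'] by simp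
    also have "\<dots> \<le> (\<integral>y. exp d * (G y * \<Psi> y) \<partial>W)"
    proof (rule integral_mono)
      show "integrable W (\<lambda>y. G y * (exp (I x' y) * \<Psi> y))" using b[OF x'] by blast
      show "integrable W (\<lambda>y. exp d * (G y * \<Psi> y))" using intGP by simp
      fix y assume y: "y \<in> space W"
      have "exp (I x' y) * \<Psi> y \<le> exp d * \<Psi> y"
        using Ppos[of y] y spW Ib[of x' y] by (intro mult_right_mono) auto
      then have "G y * (exp (I x' y) * \<Psi> y) \<le> G y * (exp d * \<Psi> y)" using G0[of y] by (rule mult_left_mono)
      thus "G y * (exp (I x' y) * \<Psi> y) \<le> exp d * (G y * \<Psi> y)" by (simp add: ac_simps)
    qed
    also have "\<dots> = exp d" using a by simp
    finally show "\<rho> * \<Psi> x' \<le> exp d" .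
  qed
  have rho_b: "1 \<le> \<rho> \<and> \<rho> \<le> exp d"
  proof -
    have r: "\<rho> = (\<integral>y. G y * (\<rho> * \<Psi> y) \<partial>W)"
    proof -
      have "\<rho> = \<rho> * (\<integral>y. G y * \<Psi> y \<partial>W)" using a by simp
      also have "\<dots> = (\<integral>y. \<rho> * (G y * \<Psi> y) \<partial>W)" by simp
      finally show ?thesis by (simp add: ac_simps)
    qed
    have intr: "integrable W (\<lambda>y. G y * (\<rho> * \<Psi> y))"
      using integrable_mult_right[OF intGP, of \<rho>] by (simp add: ac_simps)
    have "1 \<le> (\<integral>y. G y * (\<rho> * \<Psi> y) \<partial>W)"
    proof -
      have "integral\<^sup>L W G \<le> (\<integral>y. G y * (\<rho> * \<Psi> y) \<partial>W)"
      proof (rule integral_mono[OF intG intr])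
        fix y assume "y \<in> space W"
        then have "1 \<le> \<rho> * \<Psi> y" using rP spW by auto
        thus "G y \<le> G y * (\<rho> * \<Psi> y)" using G0[of y] by (simp add: mult_le_cancel_left1)
      qed
      thus ?thesis using iG by simp
    qed
    moreover have "(\<integral>y. G y * (\<rho> * \<Psi> y) \<partial>W) \<le> exp d"
    proof -
      have "(\<integral>y. G y * (\<rho> * \<Psi> y) \<partial>W) \<le> (\<integral>y. exp d * G y \<partial>W)"
      proof (rule integral_mono[OF intr])
        show "integrable W (\<lambda>y. exp d * G y)" using intG by simp
        fix y assume "y \<in> space W"
        then have "\<rho> * \<Psi> y \<le> exp d" using rP spW by auto
        then have "G y * (\<rho> * \<Psi> y) \<le> G y * exp d" using G0[of y] by (rule mult_left_mono)
        thus "G y * (\<rho> * \<Psi> y) \<le> exp d * G y" by (simp add: ac_simps)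
      qed
      thus ?thesis using iG by simp
    qed
    ultimately show ?thesis using r by simp
  qed
  have Psi_b: "exp (-d) \<le> \<Psi> y \<and> \<Psi> y \<le> exp d" if y: "y \<in> Omega1" for y
  proof
    have "exp (-d) = 1 / exp d" by (simp add: exp_minus field_simps)
    also have "\<dots> \<le> (\<rho> * \<Psi> y) / \<rho>" using rP[OF y] rho_b by (intro frac_le) auto
    finally show "exp (-d) \<le> \<Psi> y" using rho by simp
    have "(\<rho> * \<Psi> y) / \<rho> \<le> exp d / 1" using rP[OF y] rho_b by (intro frac_le) auto
    thus "\<Psi> y \<le> exp d" using rho by simp
  qed
  define h where "h = (\<lambda>y. exp (I x y) * \<Psi> y / (\<rho> * \<Psi> x))"
  have hb: "exp (-(2*d)) \<le> h y \<and> h y \<le> exp (2*d)" if y: "y \<in> Omega1" for y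
  proof
    have "exp (-(2*d)) = exp (-d) / exp d" by (subst exp_diff[symmetric]) simp
    also have "\<dots> \<le> (exp (I x y) * \<Psi> y) / (\<rho> * \<Psi> x)"
    proof (rule frac_le)
      have "1 * exp (-d) \<le> exp (I x y) * \<Psi> y"
        using Psi_b[OF y] Ib[of x y] by (intro mult_mono) auto
      thus "exp (-d) \<le> exp (I x y) * \<Psi> y" by simp
      show "0 < \<rho> * \<Psi> x" using rho Ppos[OF x] by simp
      show "\<rho> * \<Psi> x \<le> exp d" using rP[OF x] by simp
      show "0 \<le> exp (I x y) * \<Psi> y" using Ppos[OF y] by simp
    qed
    finally show "exp (-(2*d)) \<le> h y" by (simp add: h_def)
    have "(exp (I x y) * \<Psi> y) / (\<rho> * \<Psi> x) \<le> (exp d * exp d) / 1"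
    proof (rule frac_le)
      show "exp (I x y) * \<Psi> y \<le> exp d * exp d"
        using Psi_b[OF y] Ib[of x y] Ppos[OF y] by (intro mult_mono) auto
      show "0 < (1::real)" by simp
      show "1 \<le> \<rho> * \<Psi> x" using rP[OF x] by simp
    qed simp
    thus "h y \<le> exp (2*d)" by (simp add: h_def exp_add[symmetric])
  qed
  have hmeas: "h \<in> borel_measurable W"
    unfolding h_def by (rule borel_measurable_divide[OF conjunct1[OF b[OF x]]]) simp
  have K_eq: "kernel_pi W R \<beta> \<rho> \<Psi> x = density W (\<lambda>y. ennreal (G y) * ennreal (h y))"
  proof -
    have m1: "(\<lambda>y. ennreal (G y)) \<in> borel_measurable W"
      using measurable_compose[OF Gmeas measurable_ennreal] by (simp add: o_def)
    have m2: "(\<lambda>y. ennreal (h y)) \<in> borel_measurable W"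
      using measurable_compose[OF hmeas measurable_ennreal] by (simp add: o_def)
    show ?thesis
      unfolding kernel_pi_def Phat_eq
      using density_density_eq[OF m1 m2] by (simp add: h_def I_def)
  qed
  have eK: "emeasure (kernel_pi W R \<beta> \<rho> \<Psi> x) A = (\<integral>\<^sup>+ y. ennreal (G y) * ennreal (h y) * indicator A y \<partial>W)"
    unfolding K_eq using A Gmeas hmeas by (subst emeasure_density) auto
  have low: "ennreal (exp (-(3*d)) * measure W A) \<le> emeasure (kernel_pi W R \<beta> \<rho> \<Psi> x) A"
  proof -
    have "ennreal (exp (-(3*d)) * measure W A) = (\<integral>\<^sup>+ y. ennreal (exp (-(3*d))) * indicator A y \<partial>W)"
      using A by (simp add: nn_integral_cmult_indicator P.emeasure_eq_measure ennreal_mult)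
    also have "\<dots> \<le> (\<integral>\<^sup>+ y. ennreal (G y) * ennreal (h y) * indicator A y \<partial>W)"
    proof (rule nn_integral_mono)
      fix y assume y: "y \<in> space W"
      have "exp (-(3*d)) = exp (-d) * exp (-(2*d))" by (simp add: exp_add[symmetric])
      also have "\<dots> \<le> G y * h y" using Gb[of y] hb[of y] y spW G0[of y] by (intro mult_mono) auto
      finally have "ennreal (exp (-(3*d))) \<le> ennreal (G y) * ennreal (h y)"
        by (subst ennreal_mult'[symmetric, OF G0]) (rule ennreal_leI)
      thus "ennreal (exp (-(3*d))) * indicator A y \<le> ennreal (G y) * ennreal (h y) * indicator A y"
        by (cases "y \<in> A") auto
    qed
    finally show ?thesis using eK by simp
  qed
  have up: "emeasure (kernel_pi W R \<beta> \<rho> \<Psi> x) A \<le> ennreal (exp (3*d) * measure W A)"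
  proof -
    have "(\<integral>\<^sup>+ y. ennreal (G y) * ennreal (h y) * indicator A y \<partial>W) \<le> (\<integral>\<^sup>+ y. ennreal (exp (3*d)) * indicator A y \<partial>W)"
    proof (rule nn_integral_mono)
      fix y assume y: "y \<in> space W"
      have h0: "0 \<le> h y" using hb[of y] y spW exp_ge_zero[of "-(2*d)"] by (metis order_trans)
      have "G y * h y \<le> exp d * exp (2*d)" using Gb[of y] hb[of y] y spW G0[of y] h0 by (intro mult_mono) auto
      also have "\<dots> = exp (3*d)" by (simp add: exp_add[symmetric])
      finally have "ennreal (G y) * ennreal (h y) \<le> ennreal (exp (3*d))"
        by (subst ennreal_mult'[symmetric, OF G0]) (rule ennreal_leI)
      thus "ennreal (G y) * ennreal (h y) * indicator A y \<le> ennreal (exp (3*d)) * indicator A y"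
        by (cases "y \<in> A") auto
    qed
    also have "\<dots> = ennreal (exp (3*d) * measure W A)"
      using A by (simp add: nn_integral_cmult_indicator P.emeasure_eq_measure ennreal_mult)
    finally show ?thesis using eK by simp
  qed
  have fin: "emeasure (kernel_pi W R \<beta> \<rho> \<Psi> x) A \<noteq> \<top>" using up neq_top_trans[OF ennreal_neq_top] by blast
  define m where "m = measure (kernel_pi W R \<beta> \<rho> \<Psi> x) A"
  have em: "emeasure (kernel_pi W R \<beta> \<rho> \<Psi> x) A = ennreal m"
    using fin by (simp add: m_def emeasure_eq_ennreal_measure)
  have m0: "0 \<le> m" by (simp add: m_def)
  have "exp (-(3*d)) * measure W A \<le> m"
    using low ennreal_le_iff[OF m0, of "exp (-(3*d)) * measure W A"] unfolding em by blast
  moreover have "m \<le> exp (3*d) * measure W A"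
    using up ennreal_le_iff[of "exp (3*d) * measure W A" m] unfolding em by simp
  ultimately show ?thesis by (simp add: m_def d_def)
qed

lemma dTV_bounds:
  assumes "sets M = sets N" "\<And>A. A \<in> sets N \<Longrightarrow> \<bar>measure M A - measure N A\<bar> \<le> e"
  shows "0 \<le> dTV M N \<and> dTV M N \<le> e"
proof
  have bdd: "bdd_above ((\<lambda>A. \<bar>measure M A - measure N A\<bar>) ` sets M)"
    using assms by (intro bdd_aboveI[of _ e]) auto
  have "\<bar>measure M {} - measure N {}\<bar> \<le> dTV M N"
    unfolding dTV_def by (rule cSUP_upper[OF _ bdd]) simp
  thus "0 \<le> dTV M N" by simp
  show "dTV M N \<le> e" unfolding dTV_def
    by (rule cSUP_least) (use assms in auto)
qed

lemma zero_Omega1: "(\<lambda>_. 0) \<in> Omega1"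
  by (simp add: Omega1_def)

lemma delta_lim:
  fixes c :: real
  shows "((\<lambda>\<epsilon>. (beta_eps bh \<epsilon>)\<^sup>2 * c) \<longlongrightarrow> 0) (at_right 0)"
proof -
  have l: "((\<lambda>\<epsilon>::real. 1 / ln (1 / \<epsilon>)) \<longlongrightarrow> 0) (at_right 0)" by real_asymp
  have "((\<lambda>\<epsilon>::real. bh\<^sup>2 * c * (1 / ln (1 / \<epsilon>))) \<longlongrightarrow> bh\<^sup>2 * c * 0) (at_right 0)"
    by (intro tendsto_intros l)
  then have l2: "((\<lambda>\<epsilon>::real. bh\<^sup>2 * c * (1 / ln (1 / \<epsilon>))) \<longlongrightarrow> 0) (at_right 0)" by simp
  have ev: "\<forall>\<^sub>F \<epsilon> in at_right (0::real). bh\<^sup>2 * c * (1 / ln (1 / \<epsilon>)) = (beta_eps bh \<epsilon>)\<^sup>2 * c"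
  proof (rule eventually_mono[OF eventually_at_right_real[OF zero_less_one]])
    fix \<epsilon> :: real assume e: "\<epsilon> \<in> {0<..<1}"
    then have "ln (1 / \<epsilon>) > 0" by simp
    then show "bh\<^sup>2 * c * (1 / ln (1 / \<epsilon>)) = (beta_eps bh \<epsilon>)\<^sup>2 * c"
      by (simp add: beta_eps_def power_divide)
  qed
  show ?thesis using tendsto_cong[OF ev] l2 by simp
qed

theorem proposition3p1:
  fixes \<phi> :: "real \<Rightarrow> real" and \<psi> :: "real^2 \<Rightarrow> real" and \<beta>h :: real
    and W :: "(real \<Rightarrow> real^2) measure"
    and \<rho> :: "real \<Rightarrow> real" and \<Psi> :: "real \<Rightarrow> (real \<Rightarrow> real^2) \<Rightarrow> real"
  assumes phi_smooth: "smooth_fun \<phi>" and phi_nonneg: "\<And>s. \<phi> s \<ge> 0"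
    and phi_supp: "\<And>s. s \<notin> {0..1} \<Longrightarrow> \<phi> s = 0"
    and psi_smooth: "smooth_fun \<psi>" and psi_nonneg: "\<And>y. \<psi> y \<ge> 0"
    and psi_symm: "\<And>y. \<psi> (- y) = \<psi> y"
    and psi_supp: "\<And>y. norm y > 1/2 \<Longrightarrow> \<psi> y = 0"
    and beta_pos: "\<beta>h > 0"
    and W: "is_wiener W"
    and rho_pos: "\<And>\<epsilon>. \<epsilon> \<in> {0<..<1} \<Longrightarrow> \<rho> \<epsilon> > 0"
    and eigen: "\<And>\<epsilon>. \<epsilon> \<in> {0<..<1} \<Longrightarrow>
                  is_eigenpair W (conv_R \<phi> \<psi>) (beta_eps \<beta>h \<epsilon>) (\<rho> \<epsilon>) (\<Psi> \<epsilon>)"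
    and largest: "\<And>\<epsilon> lam f. \<epsilon> \<in> {0<..<1} \<Longrightarrow>
                  is_eigenpair W (conv_R \<phi> \<psi>) (beta_eps \<beta>h \<epsilon>) lam f \<Longrightarrow> lam \<le> \<rho> \<epsilon>"
    and Psi_bounds: "\<And>\<epsilon>. \<epsilon> \<in> {0<..<1} \<Longrightarrow>
                  \<exists>c C. 0 < c \<and> c \<le> C \<and> (\<forall>x\<in>Omega1. c \<le> \<Psi> \<epsilon> x \<and> \<Psi> \<epsilon> x \<le> C)"
    and Psi_norm: "\<And>\<epsilon>. \<epsilon> \<in> {0<..<1} \<Longrightarrow>
                  (\<integral>y. \<Psi> \<epsilon> y \<partial>Phat W (conv_R \<phi> \<psi>) (beta_eps \<beta>h \<epsilon>)) = 1"
  shows "((\<lambda>\<epsilon>. SUP x\<in>Omega1. dTV (kernel_pi W (conv_R \<phi> \<psi>) (beta_eps \<beta>h \<epsilon>) (\<rho> \<epsilon>) (\<Psi> \<epsilon>) x) W)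
            \<longlongrightarrow> 0) (at_right 0)
         \<and> (\<forall>\<gamma>\<in>{0<..<1}. \<exists>\<epsilon>0>0. \<forall>\<epsilon>\<in>{0<..<\<epsilon>0}. \<forall>x\<in>Omega1. \<forall>A\<in>sets W.
              measure (kernel_pi W (conv_R \<phi> \<psi>) (beta_eps \<beta>h \<epsilon>) (\<rho> \<epsilon>) (\<Psi> \<epsilon>) x) A
                \<ge> \<gamma> * measure W A)"
proof -
  obtain B where RB: "\<forall>s y. 0 \<le> conv_R \<phi> \<psi> s y \<and> conv_R \<phi> \<psi> s y \<le> B"
    using R_bounds[OF phi_smooth phi_nonneg phi_supp psi_smooth psi_nonneg psi_supp] by blast
  have B0: "0 \<le> B" using RB order_trans by blast
  define \<delta> where "\<delta> = (\<lambda>\<epsilon>. (beta_eps \<beta>h \<epsilon>)\<^sup>2 * B)"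
  have d0: "0 \<le> \<delta> \<epsilon>" for \<epsilon> using B0 by (simp add: \<delta>_def)
  interpret P: prob_space W using W by (simp add: is_wiener_def)
  have bnd: "exp (-(3*\<delta> \<epsilon>)) * measure W A \<le> measure (kernel_pi W (conv_R \<phi> \<psi>) (beta_eps \<beta>h \<epsilon>) (\<rho> \<epsilon>) (\<Psi> \<epsilon>) x) A
           \<and> measure (kernel_pi W (conv_R \<phi> \<psi>) (beta_eps \<beta>h \<epsilon>) (\<rho> \<epsilon>) (\<Psi> \<epsilon>) x) A \<le> exp (3*\<delta> \<epsilon>) * measure W A"
    if e: "\<epsilon> \<in> {0<..<1}" and x: "x \<in> Omega1" and A: "A \<in> sets W" for \<epsilon> x A
  proof -
    have Ppos: "\<And>y. y \<in> Omega1 \<Longrightarrow> 0 < \<Psi> \<epsilon> y" using Psi_bounds[OF e] by force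
    show ?thesis unfolding \<delta>_def
      by (rule kernel_bounds[OF W _ _ rho_pos[OF e] eigen[OF e] Ppos Psi_norm[OF e] x A]) (use RB in auto)
  qed
  have absb: "\<bar>measure (kernel_pi W (conv_R \<phi> \<psi>) (beta_eps \<beta>h \<epsilon>) (\<rho> \<epsilon>) (\<Psi> \<epsilon>) x) A - measure W A\<bar> \<le> exp (3*\<delta> \<epsilon>) - 1"
    if e: "\<epsilon> \<in> {0<..<1}" and x: "x \<in> Omega1" and A: "A \<in> sets W" for \<epsilon> x A
  proof -
    define t where "t = 3 * \<delta> \<epsilon>"
    define w where "w = measure W A"
    define k where "k = measure (kernel_pi W (conv_R \<phi> \<psi>) (beta_eps \<beta>h \<epsilon>) (\<rho> \<epsilon>) (\<Psi> \<epsilon>) x) A"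
    have t0: "0 \<le> t" using d0 by (simp add: t_def)
    have w0: "0 \<le> w" "w \<le> 1" by (auto simp: w_def)
    have kb: "exp (-t) * w \<le> k" "k \<le> exp t * w" using bnd[OF e x A] by (auto simp: t_def w_def k_def)
    have e1: "1 - t \<le> exp (-t)" using exp_ge_add_one_self[of "-t"] by simp
    have e2: "1 + t \<le> exp t" by simp
    have "(exp t - 1) * w \<le> exp t - 1" using w0 e2 t0 by (intro mult_right_le_one_le) auto
    then have a1: "exp t * w - w \<le> exp t - 1" by (simp add: algebra_simps)
    have "(1 - exp (-t)) * w \<le> 1 - exp (-t)" using w0 t0 by (intro mult_right_le_one_le) auto
    then have a2: "w - exp (-t) * w \<le> 1 - exp (-t)" by (simp add: algebra_simps)
    have "\<bar>k - w\<bar> \<le> exp t - 1" using a1 a2 kb e1 e2 by linarith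
    thus ?thesis by (simp add: t_def w_def k_def)
  qed
  have dTVb: "0 \<le> dTV (kernel_pi W (conv_R \<phi> \<psi>) (beta_eps \<beta>h \<epsilon>) (\<rho> \<epsilon>) (\<Psi> \<epsilon>) x) W \<and>
              dTV (kernel_pi W (conv_R \<phi> \<psi>) (beta_eps \<beta>h \<epsilon>) (\<rho> \<epsilon>) (\<Psi> \<epsilon>) x) W \<le> exp (3*\<delta> \<epsilon>) - 1"
    if e: "\<epsilon> \<in> {0<..<1}" and x: "x \<in> Omega1" for \<epsilon> x
  proof (rule dTV_bounds)
    show "sets (kernel_pi W (conv_R \<phi> \<psi>) (beta_eps \<beta>h \<epsilon>) (\<rho> \<epsilon>) (\<Psi> \<epsilon>) x) = sets W"
      by (simp add: kernel_pi_def Phat_def)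
  qed (rule absb[OF e x])
  define f where "f = (\<lambda>\<epsilon>. SUP x\<in>Omega1. dTV (kernel_pi W (conv_R \<phi> \<psi>) (beta_eps \<beta>h \<epsilon>) (\<rho> \<epsilon>) (\<Psi> \<epsilon>) x) W)"
  have supb: "0 \<le> f \<epsilon> \<and> f \<epsilon> \<le> exp (3*\<delta> \<epsilon>) - 1" if e: "\<epsilon> \<in> {0<..<1}" for \<epsilon>
  proof
    have bdd: "bdd_above ((\<lambda>x. dTV (kernel_pi W (conv_R \<phi> \<psi>) (beta_eps \<beta>h \<epsilon>) (\<rho> \<epsilon>) (\<Psi> \<epsilon>) x) W) ` Omega1)"
      using dTVb[OF e] by (intro bdd_aboveI[of _ "exp (3*\<delta> \<epsilon>) - 1"]) auto
    show "0 \<le> f \<epsilon>" unfolding f_def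
      by (rule cSUP_upper2[OF bdd zero_Omega1]) (use dTVb[OF e zero_Omega1] in auto)
    show "f \<epsilon> \<le> exp (3*\<delta> \<epsilon>) - 1" unfolding f_def
      by (rule cSUP_least) (use dTVb[OF e] zero_Omega1 in auto)
  qed
  have dl: "(\<delta> \<longlongrightarrow> 0) (at_right 0)" unfolding \<delta>_def by (rule delta_lim)
  have part1: "(f \<longlongrightarrow> 0) (at_right 0)"
  proof (rule tendsto_sandwich[of "\<lambda>_. 0" f _ "\<lambda>\<epsilon>. exp (3*\<delta> \<epsilon>) - 1"])
    show "\<forall>\<^sub>F n in at_right 0. 0 \<le> f n"
      by (rule eventually_mono[OF eventually_at_right_real[OF zero_less_one]]) (use supb in auto)
    show "\<forall>\<^sub>F n in at_right 0. f n \<le> exp (3*\<delta> n) - 1"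
      by (rule eventually_mono[OF eventually_at_right_real[OF zero_less_one]]) (use supb in auto)
    show "((\<lambda>_. 0::real) \<longlongrightarrow> 0) (at_right 0)" by simp
    have "((\<lambda>\<epsilon>. exp (3*\<delta> \<epsilon>) - 1) \<longlongrightarrow> exp (3*0) - 1) (at_right 0)"
      by (intro tendsto_intros dl)
    thus "((\<lambda>\<epsilon>. exp (3*\<delta> \<epsilon>) - 1) \<longlongrightarrow> 0) (at_right 0)" by simp
  qed
  have part2: "\<exists>\<epsilon>0>0. \<forall>\<epsilon>\<in>{0<..<\<epsilon>0}. \<forall>x\<in>Omega1. \<forall>A\<in>sets W.
              measure (kernel_pi W (conv_R \<phi> \<psi>) (beta_eps \<beta>h \<epsilon>) (\<rho> \<epsilon>) (\<Psi> \<epsilon>) x) A \<ge> \<gamma> * measure W A"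
    if g: "\<gamma> \<in> {0<..<1}" for \<gamma>
  proof -
    have "((\<lambda>\<epsilon>. exp (-(3*\<delta> \<epsilon>))) \<longlongrightarrow> exp (-(3*0))) (at_right 0)"
      by (intro tendsto_intros dl)
    then have "((\<lambda>\<epsilon>. exp (-(3*\<delta> \<epsilon>))) \<longlongrightarrow> 1) (at_right 0)" by simp
    then have ev1: "\<forall>\<^sub>F \<epsilon> in at_right 0. \<gamma> < exp (-(3*\<delta> \<epsilon>))"
      using g by (intro order_tendstoD(1)) auto
    have "\<forall>\<^sub>F \<epsilon> in at_right 0. \<gamma> < exp (-(3*\<delta> \<epsilon>)) \<and> \<epsilon> \<in> {0<..<1::real}"
      by (rule eventually_conj[OF ev1 eventually_at_right_real[OF zero_less_one]])
    then obtain b :: real where b: "b > 0" "\<And>y. y > 0 \<Longrightarrow> y < b \<Longrightarrow> \<gamma> < exp (-(3*\<delta> y)) \<and> y \<in> {0<..<1}"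
      unfolding eventually_at_right[OF zero_less_one] by blast
    show ?thesis
    proof (intro exI[of _ b] conjI ballI)
      show "0 < b" by fact
      fix \<epsilon> x A assume e: "\<epsilon> \<in> {0<..<b}" and x: "x \<in> Omega1" and A: "A \<in> sets W"
      have be: "\<gamma> < exp (-(3*\<delta> \<epsilon>))" "\<epsilon> \<in> {0<..<1}" using b(2)[of \<epsilon>] e by auto
      have "\<gamma> * measure W A \<le> exp (-(3*\<delta> \<epsilon>)) * measure W A"
        using be(1) by (intro mult_right_mono) auto
      also have "\<dots> \<le> measure (kernel_pi W (conv_R \<phi> \<psi>) (beta_eps \<beta>h \<epsilon>) (\<rho> \<epsilon>) (\<Psi> \<epsilon>) x) A"
        using bnd[OF be(2) x A] by simp
      finally show "\<gamma> * measure W A \<le> measure (kernel_pi W (conv_R \<phi> \<psi>) (beta_eps \<beta>h \<epsilon>) (\<rho> \<epsilon>) (\<Psi> \<epsilon>) x) A" .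
    qed
  qed
  show ?thesis using part1 part2 unfolding f_def by blast
qed

end
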